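(* Let $\Pi^{(1)},\Pi^{(2)}$ be two projectors on a finite-dimensional Hilbert space $\mathcal{H}$. For every $\delta>0$ there exists a projector $\Pi^\star$ on $\mathcal{H}$ such that for all quantum states $\rho\in\mathcal{D}(\mathcal{H})$, $$\mathrm{Tr}[\Pi^\star\rho]\ge\max\{\mathrm{Tr}[\Pi^{(1)}\rho],\mathrm{Tr}[\Pi^{(2)}\rho]\}-\delta,$$ and $$\Pi^\star\preceq\frac{2}{\delta^2}\left(\Pi^{(1)}+\Pi^{(2)}\right).$$
   Context: $\mathcal{D}(\mathcal{H})$ is the set of density operators on $\mathcal{H}$; $P\preceq Q$ means $Q-P$ is positive semi-definite. *)

theory Defs
  imports "HOL-Analysis.Analysis"
begin

definition conj_transpose :: "complex^'n^'n \<Rightarrow> complex^'n^'n" where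
  "conj_transpose A = (\<chi> i j. cnj (A $ j $ i))"

definition hermitian :: "complex^'n^'n \<Rightarrow> bool" where
  "hermitian A \<longleftrightarrow> conj_transpose A = A"

definition is_projector :: "complex^'n^'n \<Rightarrow> bool" where
  "is_projector P \<longleftrightarrow> P ** P = P \<and> hermitian P"

definition psd :: "complex^'n^'n \<Rightarrow> bool" where
  "psd A \<longleftrightarrow> hermitian A \<and> (\<forall>x::complex^'n. 0 \<le> Re (\<Sum>i\<in>UNIV. cnj (x $ i) * (A *v x) $ i))"

definition density :: "complex^'n^'n \<Rightarrow> bool" where
  "density \<rho> \<longleftrightarrow> psd \<rho> \<and> trace \<rho> = 1"

definition loewner_le :: "complex^'n^'n \<Rightarrow> complex^'n^'n \<Rightarrow> bool" where
  "loewner_le P Q \<longleftrightarrow> psd (Q - P)"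

end

theory Submission
  imports Defs
begin


definition cinner :: "complex^'n \<Rightarrow> complex^'n \<Rightarrow> complex" where
  "cinner x y = (\<Sum>i\<in>UNIV. cnj (x $ i) * y $ i)"

lemma cinner_add_right: "cinner x (y + z) = cinner x y + cinner x z"
  by (simp add: cinner_def distrib_left sum.distrib)
lemma cinner_add_left: "cinner (x + y) z = cinner x z + cinner y z"
  by (simp add: cinner_def distrib_right sum.distrib)
lemma cinner_diff_right: "cinner x (y - z) = cinner x y - cinner x z"
  by (simp add: cinner_def right_diff_distrib sum_subtractf)
lemma cinner_diff_left: "cinner (x - y) z = cinner x z - cinner y z"
  by (simp add: cinner_def left_diff_distrib sum_subtractf)
lemma cinner_scale_right: "cinner x (c *s y) = c * cinner x y"
  by (simp add: cinner_def sum_distrib_left algebra_simps)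
lemma cinner_scale_left: "cinner (c *s x) y = cnj c * cinner x y"
  by (simp add: cinner_def sum_distrib_left algebra_simps)
lemma cinner_zero_left[simp]: "cinner 0 y = 0" and cinner_zero_right[simp]: "cinner x 0 = 0"
  by (simp_all add: cinner_def)
lemma cinner_sum_right: "cinner x (sum f B) = (\<Sum>u\<in>B. cinner x (f u))"
  by (induct B rule: infinite_finite_induct) (simp_all add: cinner_add_right)
lemma cinner_sum_left: "cinner (sum f B) y = (\<Sum>u\<in>B. cinner (f u) y)"
  by (induct B rule: infinite_finite_induct) (simp_all add: cinner_add_left)
lemma cinner_commute: "cinner y x = cnj (cinner x y)"
  by (simp add: cinner_def mult.commute)
lemma cinner_self: "cinner x x = of_real ((norm x)\<^sup>2)"
proof -
  have "(norm x)\<^sup>2 = (\<Sum>i\<in>UNIV. (norm (x $ i))\<^sup>2)"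
    unfolding norm_vec_def L2_set_def by (simp add: sum_nonneg)
  have "cinner x x = (\<Sum>i\<in>UNIV. of_real ((norm (x $ i))\<^sup>2))"
    unfolding cinner_def by (intro sum.cong refl) (simp add: complex_norm_square[symmetric] mult.commute)
  also have "\<dots> = of_real ((norm x)\<^sup>2)" unfolding \<open>(norm x)\<^sup>2 = _\<close> of_real_sum ..
  finally show ?thesis .
qed
lemma cinner_self_Re: "Re (cinner x x) = (norm x)\<^sup>2"
  by (simp add: cinner_self)
lemma cinner_self_eq: "cinner x x = of_real (Re (cinner x x))"
  by (simp add: cinner_self)
lemma cinner_self_zero: "cinner x x = 0 \<longleftrightarrow> x = 0"
  by (simp add: cinner_self)
lemma inner_cinner: "inner x y = Re (cinner x y)"
  by (simp add: inner_vec_def cinner_def inner_complex_def)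

lemma hermitian_entry: "hermitian M \<Longrightarrow> cnj (M $ i $ j) = M $ j $ i"
  unfolding hermitian_def conj_transpose_def
  by (metis (no_types, lifting) vec_lambda_beta)

lemma hermitian_cinner:
  assumes "hermitian M" shows "cinner x (M *v y) = cinner (M *v x) y"
proof -
  have "cinner x (M *v y) = (\<Sum>i\<in>UNIV. \<Sum>j\<in>UNIV. cnj (x $ i) * M $ i $ j * y $ j)"
    by (simp add: cinner_def matrix_vector_mult_def sum_distrib_left mult.assoc)
  also have "\<dots> = (\<Sum>j\<in>UNIV. \<Sum>i\<in>UNIV. cnj (x $ i) * M $ i $ j * y $ j)"
    by (rule sum.swap)
  also have "\<dots> = cinner (M *v x) y"
    unfolding cinner_def matrix_vector_mult_def
    by (simp add: cnj_sum sum_distrib_right sum_distrib_left hermitian_entry[OF assms] mult_ac)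
  finally show ?thesis .
qed

lemma hermitian_qf_real: "hermitian M \<Longrightarrow> cinner x (M *v x) = of_real (Re (cinner x (M *v x)))"
proof -
  assume h: "hermitian M"
  have "cnj (cinner x (M *v x)) = cinner x (M *v x)"
    using cinner_commute[of "M *v x" x] hermitian_cinner[OF h, of x x] by simp
  then have "Im (cinner x (M *v x)) = 0" by (metis cnj.sel(2) complex_cnj_cancel_iff neg_equal_zero) 
  then show ?thesis by (simp add: complex_eq_iff)
qed

lemma scaleR_s: "r *\<^sub>R (y::complex^'n) = complex_of_real r *s y"
  by (simp add: vec_eq_iff vector_scalar_mult_def scaleR_conv_of_real[where 'a=complex] del: scaleR_conv_of_real)
lemma mv_scale: "A *v (c *s y) = c *s (A *v (y::complex^'n))"
  by (simp add: vec_eq_iff matrix_vector_mult_def sum_distrib_left mult_ac)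
lemma mv_add: "A *v (x + y) = A *v x + A *v (y::complex^'n)"
  by (simp add: matrix_vector_right_distrib)
lemma mv_diff: "A *v (x - y) = A *v x - A *v (y::complex^'n)"
  by (simp add: vec_eq_iff matrix_vector_mult_def sum_subtractf right_diff_distrib)
lemma mv_sum: "A *v (sum f B) = (\<Sum>u\<in>B. A *v (f u::complex^'n))"
  by (induct B rule: infinite_finite_induct) (simp_all add: mv_add)


definition eigsys :: "complex^'n^'n \<Rightarrow> (complex^'n) set \<Rightarrow> bool" where
  "eigsys A B \<longleftrightarrow> (\<forall>u\<in>B. cinner u u = 1) \<and> (\<forall>u\<in>B. \<forall>w\<in>B. u \<noteq> w \<longrightarrow> cinner u w = 0)
     \<and> (\<forall>u\<in>B. A *v u = cinner u (A *v u) *s u)"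

lemma eigsys_unit: "eigsys A B \<Longrightarrow> u \<in> B \<Longrightarrow> cinner u u = 1"
  unfolding eigsys_def by blast
lemma eigsys_orth: "eigsys A B \<Longrightarrow> u \<in> B \<Longrightarrow> w \<in> B \<Longrightarrow> u \<noteq> w \<Longrightarrow> cinner u w = 0"
  unfolding eigsys_def by blast
lemma eigsys_eig: "eigsys A B \<Longrightarrow> u \<in> B \<Longrightarrow> A *v u = cinner u (A *v u) *s u"
  unfolding eigsys_def by blast

lemma eigsys_card:
  fixes B :: "(complex^'n) set"
  assumes "eigsys A B" shows "finite B \<and> card B \<le> DIM(complex^'n)"
proof -
  have "pairwise orthogonal B"
    using eigsys_orth[OF assms] unfolding pairwise_def orthogonal_def inner_cinner by auto
  moreover have "0 \<notin> B" using eigsys_unit[OF assms, of 0] by auto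
  ultimately have "independent B" by (rule pairwise_orthogonal_independent)
  then show ?thesis by (rule Linear_Algebra.independent_bound)
qed

lemma orth_sum:
  assumes "eigsys A B" "finite B" "u \<in> B"
  shows "(\<Sum>w\<in>B. f w * cinner u w) = f u"
proof -
  have "(\<Sum>w\<in>B. f w * cinner u w) = f u * cinner u u + (\<Sum>w\<in>B-{u}. f w * cinner u w)"
    using assms by (simp add: sum.remove)
  also have "(\<Sum>w\<in>B-{u}. f w * cinner u w) = 0"
    using eigsys_orth[OF assms(1) assms(3)] by (intro sum.neutral) auto
  finally show ?thesis using eigsys_unit[OF assms(1) assms(3)] by simp
qed

lemma quad_zero:
  fixes a b :: real
  assumes "\<And>s. 2 * s * a \<le> s\<^sup>2 * b"
  shows "a = 0"
proof (rule ccontr)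
  assume "a \<noteq> 0"
  define s where "s = a / (2 * (\<bar>b\<bar> + 1))"
  have aa: "a * a > 0" using \<open>a \<noteq> 0\<close> by (metis linorder_neq_iff mult_neg_neg mult_pos_pos)
  have "s * a = (a * a) / (2 * (\<bar>b\<bar> + 1))" unfolding s_def by simp
  also have "\<dots> > 0" using aa by (intro divide_pos_pos) auto
  finally have sp: "s * a > 0" .
  have "2 * s * a \<le> s\<^sup>2 * b" by (rule assms)
  also have "\<dots> \<le> s\<^sup>2 * \<bar>b\<bar>" by (simp add: mult_left_mono)
  also have "s\<^sup>2 * \<bar>b\<bar> = s * a * (\<bar>b\<bar> / (2 * (\<bar>b\<bar> + 1)))"
    unfolding s_def power2_eq_square by (simp add: field_simps)
  also have "\<dots> < s * a * 1"
    using sp by (intro mult_strict_left_mono) auto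
  finally show False using sp by (simp add: mult.commute)
qed

lemma eig_step:
  fixes A :: "complex^'n^'n" and B :: "(complex^'n) set"
  assumes h: "hermitian A" and e: "eigsys A B" and x0: "x \<noteq> 0" and xB: "\<forall>u\<in>B. cinner u x = 0"
  shows "\<exists>v. v \<notin> B \<and> eigsys A (insert v B)"
proof -
  define S where "S = {y::complex^'n. norm y = 1 \<and> (\<forall>u\<in>B. cinner u y = 0)}"
  define f where "f = (\<lambda>y::complex^'n. Re (cinner y (A *v y)))"
  have cont: "continuous_on S f" unfolding f_def cinner_def matrix_vector_mult_def
    by (intro continuous_intros)
  have closedS: "closed S"
  proof -
    have "S = sphere 0 1 \<inter> (\<Inter>u\<in>B. {y. cinner u y = 0})" unfolding S_def by auto
    moreover have "closed {y. cinner u y = 0}" for u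
      unfolding cinner_def by (intro closed_Collect_eq continuous_intros)
    ultimately show ?thesis by (auto intro!: closed_Int closed_INT)
  qed
  have "bounded S" unfolding S_def bounded_iff by auto
  then have compS: "compact S" using closedS by (simp add: compact_eq_bounded_closed)
  define x1 where "x1 = (1 / norm x) *\<^sub>R x"
  have "norm x1 = 1" using x0 unfolding x1_def by simp
  moreover have "\<forall>u\<in>B. cinner u x1 = 0" using xB unfolding x1_def
    by (simp add: scaleR_s cinner_scale_right)
  ultimately have "x1 \<in> S" unfolding S_def by blast
  then have "S \<noteq> {}" by auto
  then obtain v where vS: "v \<in> S" and vmax: "\<forall>y\<in>S. f y \<le> f v"
    using continuous_attains_sup[OF compS _ cont] by blast
  have v1: "cinner v v = 1" using vS unfolding S_def by (simp add: cinner_self)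
  have vB: "\<forall>u\<in>B. cinner u v = 0" using vS unfolding S_def by simp
  define lam where "lam = f v"
  have key: "Re (cinner w (A *v v)) = 0" if wB: "\<forall>u\<in>B. cinner u w = 0" and wv: "cinner v w = 0" for w
  proof -
    let ?N = "Re (cinner w w)"
    let ?a = "Re (cinner w (A *v v))"
    have "2 * s * ?a \<le> s\<^sup>2 * (lam * ?N - f w)" for s :: real
    proof -
      define y where "y = v + complex_of_real s *s w"
      have yB: "\<forall>u\<in>B. cinner u y = 0" using vB wB by (simp add: y_def cinner_add_right cinner_scale_right)
      have wv': "cinner w v = 0" using wv cinner_commute[of w v] by simp
      have yy: "cinner y y = 1 + of_real (s\<^sup>2) * cinner w w"
        unfolding y_def by (simp add: cinner_add_left cinner_add_right cinner_scale_left cinner_scale_right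
            v1 wv wv' power2_eq_square)
      have ny: "(norm y)\<^sup>2 = 1 + s\<^sup>2 * ?N" using arg_cong[OF yy, of Re] cinner_self_Re[of y] by simp
      have Nnn: "?N \<ge> 0" by (simp add: cinner_self_Re)
      then have ny1: "(norm y)\<^sup>2 \<ge> 1" using ny by simp
      then have npos: "norm y > 0" by (metis norm_zero not_one_le_zero norm_ge_zero order_le_less zero_power2)
      have "norm ((1 / norm y) *\<^sub>R y) = 1" using npos by simp
      moreover have "\<forall>u\<in>B. cinner u ((1 / norm y) *\<^sub>R y) = 0" using yB
        by (simp add: scaleR_s cinner_scale_right)
      ultimately have "(1 / norm y) *\<^sub>R y \<in> S" unfolding S_def by blast
      hence le1: "f ((1 / norm y) *\<^sub>R y) \<le> lam" using vmax lam_def by blast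
      have "f ((1 / norm y) *\<^sub>R y) = f y / (norm y)\<^sup>2"
        unfolding f_def scaleR_s by (simp add: mv_scale cinner_scale_left cinner_scale_right power2_eq_square)
      with le1 have fy: "f y \<le> lam * (norm y)\<^sup>2" using npos by (simp add: divide_le_eq)
      have c1: "cinner v (A *v w) = cnj (cinner w (A *v v))"
        using hermitian_cinner[OF h, of v w] cinner_commute[of "A *v v" w] by simp
      have "f y = lam + 2 * s * ?a + s\<^sup>2 * f w"
        unfolding f_def lam_def y_def
        by (simp add: mv_add mv_scale cinner_add_left cinner_add_right cinner_scale_left cinner_scale_right
            c1 power2_eq_square algebra_simps)
      with fy ny show ?thesis by (simp add: algebra_simps)
    qed
    then show ?thesis by (rule quad_zero)
  qed
  have key2: "cinner w (A *v v) = 0" if wB: "\<forall>u\<in>B. cinner u w = 0" and wv: "cinner v w = 0" for w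
  proof -
    have r: "Re (cinner w (A *v v)) = 0" using key wB wv by blast
    have "Re (cinner (\<i> *s w) (A *v v)) = 0"
      using wB wv by (intro key) (simp_all add: cinner_scale_right)
    then have "Im (cinner w (A *v v)) = 0" by (simp add: cinner_scale_left)
    with r show ?thesis by (simp add: complex_eq_iff)
  qed
  define mu where "mu = cinner v (A *v v)"
  define w0 where "w0 = A *v v - mu *s v"
  have AvB: "cinner u (A *v v) = 0" if "u \<in> B" for u
  proof -
    have "cinner u (A *v v) = cinner (A *v u) v" by (rule hermitian_cinner[OF h])
    also have "\<dots> = cinner (cinner u (A *v u) *s u) v" using eigsys_eig[OF e that] by simp
    also have "\<dots> = 0" using vB that by (simp add: cinner_scale_left)
    finally show ?thesis .
  qed
  have w0B: "\<forall>u\<in>B. cinner u w0 = 0" using AvB vB unfolding w0_def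
    by (simp add: cinner_diff_right cinner_scale_right)
  have w0v: "cinner v w0 = 0" unfolding w0_def mu_def
    by (simp add: cinner_diff_right cinner_scale_right v1)
  have w0A: "cinner w0 (A *v v) = 0" by (rule key2[OF w0B w0v])
  have "cinner w0 v = 0" using w0v cinner_commute[of w0 v] by simp
  then have "cinner w0 (A *v v - mu *s v) = 0" using w0A
    by (simp add: cinner_diff_right cinner_scale_right)
  then have "cinner w0 w0 = 0" by (simp only: w0_def[symmetric])
  then have "w0 = 0" by (simp add: cinner_self_zero)
  then have eig: "A *v v = cinner v (A *v v) *s v" unfolding w0_def mu_def by simp
  have vnB: "v \<notin> B" using vB v1 by force
  have "eigsys A (insert v B)"
    unfolding eigsys_def
  proof (intro conjI ballI impI)
    fix u assume "u \<in> insert v B"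
    then show "cinner u u = 1" using v1 eigsys_unit[OF e] by blast
  next
    fix u w assume u: "u \<in> insert v B" and w: "w \<in> insert v B" and uw: "u \<noteq> w"
    show "cinner u w = 0"
    proof (cases "u = v")
      case True
      then have "w \<in> B" using w uw by blast
      then show ?thesis using True vB cinner_commute[of v w] by simp
    next
      case False
      then have "u \<in> B" using u by blast
      show ?thesis
      proof (cases "w = v")
        case True then show ?thesis using vB \<open>u \<in> B\<close> by simp
      next
        case False then show ?thesis using eigsys_orth[OF e \<open>u \<in> B\<close> _ uw] w by blast
      qed
    qed
  next
    fix u assume "u \<in> insert v B"
    then show "A *v u = cinner u (A *v u) *s u" using eig eigsys_eig[OF e] by blast
  qed
  with vnB show ?thesis by blast
qed

lemma spectral:
  fixes A :: "complex^'n^'n"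
  assumes h: "hermitian A"
  shows "\<exists>B. eigsys A B \<and> finite B \<and> (\<forall>x. x = (\<Sum>u\<in>B. cinner u x *s u))"
proof -
  have "\<exists>B'. eigsys A B' \<and> finite B' \<and> (\<forall>x. x = (\<Sum>u\<in>B'. cinner u x *s u))"
    if "eigsys A B" for B :: "(complex^'n) set"
    using that
  proof (induction "DIM(complex^'n) - card B" arbitrary: B rule: less_induct)
    case less
    have fin: "finite B" and cardB: "card B \<le> DIM(complex^'n)" using eigsys_card[OF less.prems] by auto
    show ?case
    proof (cases "\<exists>x. x \<noteq> 0 \<and> (\<forall>u\<in>B. cinner u x = 0)")
      case True
      then obtain x where "x \<noteq> 0" "\<forall>u\<in>B. cinner u x = 0" by blast
      from eig_step[OF h less.prems this] obtain v where v: "v \<notin> B" "eigsys A (insert v B)" by blast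
      have "card (insert v B) \<le> DIM(complex^'n)" using eigsys_card[OF v(2)] by auto
      moreover have "card (insert v B) = Suc (card B)" using fin v(1) by simp
      ultimately have "DIM(complex^'n) - card (insert v B) < DIM(complex^'n) - card B" by simp
      from less.hyps[OF this v(2)] show ?thesis .
    next
      case False
      have "x = (\<Sum>u\<in>B. cinner u x *s u)" for x
      proof -
        define r where "r = x - (\<Sum>u\<in>B. cinner u x *s u)"
        have "cinner u r = 0" if "u \<in> B" for u
        proof -
          have "cinner u (\<Sum>w\<in>B. cinner w x *s w) = (\<Sum>w\<in>B. cinner w x * cinner u w)"
            by (simp add: cinner_sum_right cinner_scale_right)
          also have "\<dots> = cinner u x" by (rule orth_sum[OF less.prems fin that])
          finally show ?thesis unfolding r_def by (simp add: cinner_diff_right)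
        qed
        with False have "r = 0" by blast
        then show ?thesis unfolding r_def by simp
      qed
      with less.prems fin show ?thesis by blast
    qed
  qed
  moreover have "eigsys A {}" unfolding eigsys_def by simp
  ultimately show ?thesis by blast
qed

lemma eigsys_subset: "eigsys A B \<Longrightarrow> K \<subseteq> B \<Longrightarrow> eigsys A K"
  unfolding eigsys_def by blast

lemma coeff_sum:
  assumes "eigsys A K" "finite K" "w \<in> K"
  shows "cinner w (\<Sum>u\<in>K. b u *s u) = b w"
  using orth_sum[OF assms, of b] by (simp add: cinner_sum_right cinner_scale_right)

lemma parseval:
  assumes "eigsys A K" "finite K"
  shows "cinner (\<Sum>w\<in>K. a w *s w) (\<Sum>u\<in>K. b u *s u) = (\<Sum>u\<in>K. cnj (a u) * b u)"
  by (simp add: cinner_sum_left cinner_scale_left coeff_sum[OF assms])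

definition proj :: "(complex^'n) set \<Rightarrow> complex^'n^'n" where
  "proj J = (\<chi> i j. \<Sum>u\<in>J. u $ i * cnj (u $ j))"

lemma proj_mv: "proj J *v x = (\<Sum>u\<in>J. cinner u x *s u)"
  by (simp add: vec_eq_iff proj_def matrix_vector_mult_def cinner_def sum_component
      sum_distrib_left sum_distrib_right mult_ac sum.swap[of _ J])

lemma proj_hermitian: "hermitian (proj J)"
  by (simp add: hermitian_def conj_transpose_def proj_def vec_eq_iff cnj_sum mult.commute)

lemma proj_idem:
  assumes "eigsys A J" "finite J"
  shows "proj J ** proj J = proj J"
proof -
  have "(proj J ** proj J) *v x = proj J *v x" for x
    by (simp add: matrix_vector_mul_assoc[symmetric] proj_mv coeff_sum[OF assms])
  then show ?thesis by (simp add: matrix_eq)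
qed



lemma mvM_add: "(M + N) *v x = M *v x + N *v (x::complex^'n)"
  by (simp add: vec_eq_iff matrix_vector_mult_def sum.distrib distrib_right)
lemma mvM_diff: "(M - N) *v x = M *v x - N *v (x::complex^'n)"
  by (simp add: vec_eq_iff matrix_vector_mult_def sum_subtractf left_diff_distrib)
lemma mvM_scaleR: "(c *\<^sub>R M) *v x = complex_of_real c *s (M *v (x::complex^'n))"
  by (simp add: vec_eq_iff matrix_vector_mult_def sum_distrib_left scaleR_conv_of_real[where 'a=complex] mult_ac
      del: scaleR_conv_of_real)

lemma hermitian_iff: "hermitian M \<longleftrightarrow> (\<forall>i j. cnj (M $ i $ j) = M $ j $ i)"
  unfolding hermitian_def conj_transpose_def vec_eq_iff by auto

lemma hermitian_add: "hermitian M \<Longrightarrow> hermitian N \<Longrightarrow> hermitian (M + N)"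
  unfolding hermitian_iff by simp

lemma hermitian_comb: "hermitian M \<Longrightarrow> hermitian N \<Longrightarrow> hermitian (c *\<^sub>R M - N)"
  unfolding hermitian_iff by (simp add: scaleR_conv_of_real[where 'a=complex] del: scaleR_conv_of_real)

lemma projector_PP: "is_projector P \<Longrightarrow> P *v (P *v x) = P *v x"
  unfolding is_projector_def by (simp add: matrix_vector_mul_assoc)

lemma projector_cinner: 
  assumes "is_projector P"
  shows "cinner (P *v x) (P *v x) = cinner x (P *v x)"
proof -
  have h: "hermitian P" using assms unfolding is_projector_def by blast
  have "cinner (P *v x) (P *v x) = cinner x (P *v (P *v x))" by (rule hermitian_cinner[OF h, symmetric])
  then show ?thesis by (simp add: projector_PP[OF assms])
qed

lemma projector_qf: "is_projector P \<Longrightarrow> Re (cinner x (P *v x)) = (norm (P *v x))\<^sup>2"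
  using projector_cinner[of P x] cinner_self_Re[of "P *v x"] by simp

lemma projector_norm:
  assumes "is_projector P" shows "norm (P *v y) \<le> norm y"
proof -
  have h: "hermitian P" using assms unfolding is_projector_def by blast
  have c1: "cinner (P *v y) y = cinner y (P *v y)" using hermitian_cinner[OF h, of y y] by simp
  have e: "cinner (y - P *v y) (y - P *v y) = cinner y y - cinner y (P *v y)"
    unfolding cinner_diff_left cinner_diff_right c1 projector_cinner[OF assms] by simp
  have "(norm (y - P *v y))\<^sup>2 = Re (cinner (y - P *v y) (y - P *v y))" by (rule cinner_self_Re[symmetric])
  also have "\<dots> = Re (cinner y y) - Re (cinner y (P *v y))" unfolding e by simp
  also have "\<dots> = (norm y)\<^sup>2 - (norm (P *v y))\<^sup>2" unfolding cinner_self_Re projector_qf[OF assms] ..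
  finally have "(norm (P *v y))\<^sup>2 \<le> (norm y)\<^sup>2"
    using zero_le_power2[of "norm (y - P *v y)"] by linarith
  from power2_le_imp_le[OF this norm_ge_zero] show ?thesis .
qed


lemma arith_final:
  fixes a b p q \<delta> :: real
  assumes "0 < \<delta>" "\<delta> \<le> 1" "0 \<le> a" "0 \<le> q" "q\<^sup>2 \<le> \<delta>\<^sup>2 / 2 * b\<^sup>2" "p \<le> a + q" "0 \<le> p"
  shows "p\<^sup>2 \<le> a\<^sup>2 + \<delta> * (a\<^sup>2 + b\<^sup>2)"
proof -
  have "p\<^sup>2 \<le> (a + q)\<^sup>2" using assms by (intro power_mono) auto
  have "0 \<le> (\<delta> * a - q)\<^sup>2" by simp
  then have "0 \<le> (\<delta>\<^sup>2 * a\<^sup>2 - 2 * \<delta> * a * q + q\<^sup>2) / \<delta>" using assms(1)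
    by (simp add: power2_eq_square algebra_simps)
  then have h1: "2 * a * q \<le> \<delta> * a\<^sup>2 + q\<^sup>2 / \<delta>" using assms(1)
    by (simp add: field_simps power2_eq_square)
  have "q\<^sup>2 * (1 + \<delta>) \<le> \<delta>\<^sup>2 / 2 * b\<^sup>2 * (1 + \<delta>)" using assms by (intro mult_right_mono) auto
  also have "\<dots> = \<delta>\<^sup>2 * b\<^sup>2 * ((1 + \<delta>) / 2)" by simp
  also have "\<dots> \<le> \<delta>\<^sup>2 * b\<^sup>2 * 1" using assms by (intro mult_left_mono) auto
  finally have "q\<^sup>2 * (1 + \<delta>) \<le> \<delta>\<^sup>2 * b\<^sup>2" by simp
  then have h2: "q\<^sup>2 / \<delta> + q\<^sup>2 \<le> \<delta> * b\<^sup>2" using assms(1)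
    by (simp add: field_simps power2_eq_square)
  show ?thesis using \<open>p\<^sup>2 \<le> (a + q)\<^sup>2\<close> h1 h2 by (simp add: power2_eq_square algebra_simps)
qed



lemma cnj_mult_self: "cnj a * a = complex_of_real ((cmod a)\<^sup>2)"
  by (metis complex_norm_square mult.commute)

lemma main_ineq:
  fixes P Q :: "complex^'n^'n" and \<delta> :: real and B :: "(complex^'n) set"
  assumes P: "is_projector P" and Q: "is_projector Q" and d0: "0 < \<delta>" and d1: "\<delta> \<le> 1"
    and e: "eigsys (P + Q) B" and fin: "finite B" and comp: "\<forall>x. x = (\<Sum>u\<in>B. cinner u x *s u)"
  shows "Re (cinner x (P *v x)) \<le>
     Re (cinner x (proj {u\<in>B. Re (cinner u ((P + Q) *v u)) \<ge> \<delta>\<^sup>2 / 2} *v x)) + \<delta> * (norm x)\<^sup>2"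
proof -
  define A where "A = P + Q"
  define J where "J = {u\<in>B. Re (cinner u (A *v u)) \<ge> \<delta>\<^sup>2 / 2}"
  define lam where "lam u = Re (cinner u (A *v u))" for u
  define c where "c u = cinner u x" for u
  define n where "n u = (cmod (c u))\<^sup>2" for u
  define cy where "cy u = (if u \<in> J then c u else 0)" for u
  define cz where "cz u = (if u \<in> J then 0 else c u)" for u
  define y where "y = (\<Sum>u\<in>B. cy u *s u)"
  define z where "z = (\<Sum>u\<in>B. cz u *s u)"
  have hP: "hermitian P" and hQ: "hermitian Q" using P Q unfolding is_projector_def by auto
  have hA: "hermitian A" unfolding A_def by (rule hermitian_add[OF hP hQ])
  have eA: "eigsys A B" using e unfolding A_def .
  have Au: "A *v u = of_real (lam u) *s u" if "u \<in> B" for u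
  proof -
    have 1: "A *v u = cinner u (A *v u) *s u" by (rule eigsys_eig[OF eA that])
    have 2: "cinner u (A *v u) = of_real (lam u)" unfolding lam_def by (rule hermitian_qf_real[OF hA])
    show ?thesis using 1 unfolding 2 .
  qed
  have xs: "x = (\<Sum>u\<in>B. c u *s u)" unfolding c_def by (rule comp[rule_format])
  have JB: "J \<subseteq> B" unfolding J_def by auto
  have pjJ: "proj J *v x = y"
  proof -
    have "y = (\<Sum>u\<in>B. if u \<in> J then c u *s u else 0)"
      unfolding y_def by (rule sum.cong) (auto simp: cy_def)
    also have "\<dots> = (\<Sum>u\<in>B \<inter> J. c u *s u)" by (simp add: sum.inter_restrict fin)
    also have "B \<inter> J = J" using JB by blast
    finally show ?thesis by (simp add: proj_mv c_def)
  qed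
  have xyz: "x = y + z"
  proof -
    have "y + z = (\<Sum>u\<in>B. cy u *s u + cz u *s u)" unfolding y_def z_def by (simp add: sum.distrib)
    also have "\<dots> = (\<Sum>u\<in>B. c u *s u)"
      by (rule sum.cong) (auto simp: cy_def cz_def)
    finally show ?thesis using xs by simp
  qed
  have Rxx: "(norm x)\<^sup>2 = (\<Sum>u\<in>B. n u)"
  proof -
    have "cinner x x = (\<Sum>u\<in>B. cnj (c u) * c u)"
      using parseval[OF eA fin, of c c] by (simp only: xs[symmetric])
    then show ?thesis unfolding cinner_self_Re[symmetric] n_def by (simp add: cnj_mult_self)
  qed
  have Ryy: "(norm y)\<^sup>2 = (\<Sum>u\<in>B. if u \<in> J then n u else 0)"
  proof -
    have "cinner y y = (\<Sum>u\<in>B. cnj (cy u) * cy u)" unfolding y_def by (rule parseval[OF eA fin])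
    then show ?thesis unfolding cinner_self_Re[symmetric] n_def
      by (simp add: cnj_mult_self cy_def if_distrib cong: if_cong)
  qed
  have Rzz: "(norm z)\<^sup>2 = (\<Sum>u\<in>B. if u \<in> J then 0 else n u)"
  proof -
    have "cinner z z = (\<Sum>u\<in>B. cnj (cz u) * cz u)" unfolding z_def by (rule parseval[OF eA fin])
    then show ?thesis unfolding cinner_self_Re[symmetric] n_def
      by (simp add: cnj_mult_self cz_def if_distrib cong: if_cong)
  qed
  have Rsum: "(norm x)\<^sup>2 = (norm y)\<^sup>2 + (norm z)\<^sup>2"
    unfolding Rxx Ryy Rzz sum.distrib[symmetric] by (rule sum.cong) auto
  have zy: "cinner z y = 0"
  proof -
    have "cinner z y = (\<Sum>u\<in>B. cnj (cz u) * cy u)" unfolding y_def z_def by (rule parseval[OF eA fin])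
    also have "\<dots> = 0" by (rule sum.neutral) (auto simp: cy_def cz_def)
    finally show ?thesis .
  qed
  have Rpj: "Re (cinner x (proj J *v x)) = (norm y)\<^sup>2"
    unfolding pjJ using zy by (subst xyz) (simp add: cinner_add_left cinner_self_Re)
  have Az: "A *v z = (\<Sum>u\<in>B. (cz u * of_real (lam u)) *s u)"
    unfolding z_def mv_sum by (rule sum.cong) (simp_all add: mv_scale Au vector_smult_assoc)
  have RzAz: "Re (cinner z (A *v z)) = (\<Sum>u\<in>B. lam u * (if u \<in> J then 0 else n u))"
  proof -
    have "cinner z (A *v z) = cinner z (\<Sum>u\<in>B. (cz u * of_real (lam u)) *s u)"
      by (simp only: Az)
    also have "\<dots> = (\<Sum>u\<in>B. cnj (cz u) * (cz u * of_real (lam u)))"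
      unfolding z_def by (rule parseval[OF eA fin])
    finally have "cinner z (A *v z) = (\<Sum>u\<in>B. cnj (cz u) * (cz u * of_real (lam u)))" .
    then have "Re (cinner z (A *v z)) = (\<Sum>u\<in>B. Re (cnj (cz u) * (cz u * of_real (lam u))))" by simp
    also have "\<dots> = (\<Sum>u\<in>B. lam u * (if u \<in> J then 0 else n u))"
    proof (rule sum.cong)
      fix u assume "u \<in> B"
      have "cnj (c u) * (c u * of_real (lam u)) = complex_of_real ((cmod (c u))\<^sup>2) * of_real (lam u)"
        by (simp only: mult.assoc[symmetric] cnj_mult_self)
      then have eq: "cnj (c u) * (c u * of_real (lam u)) = complex_of_real ((cmod (c u))\<^sup>2 * lam u)"
        by simp
      show "Re (cnj (cz u) * (cz u * of_real (lam u))) = lam u * (if u \<in> J then 0 else n u)"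
      proof (cases "u \<in> J")
        case False
        then have "cz u = c u" unfolding cz_def by simp
        then show ?thesis using False unfolding n_def by (simp only: eq Re_complex_of_real) simp
      qed (simp add: cz_def)
    qed simp
    finally show ?thesis .
  qed
  have "Re (cinner z (A *v z)) \<le> (\<Sum>u\<in>B. \<delta>\<^sup>2 / 2 * (if u \<in> J then 0 else n u))"
    unfolding RzAz
  proof (rule sum_mono)
    fix u assume "u \<in> B"
    show "lam u * (if u \<in> J then 0 else n u) \<le> \<delta>\<^sup>2 / 2 * (if u \<in> J then 0 else n u)"
    proof (cases "u \<in> J")
      case False
      then have "lam u < \<delta>\<^sup>2 / 2" using \<open>u \<in> B\<close> unfolding J_def lam_def by auto
      moreover have "n u \<ge> 0" unfolding n_def by simp
      ultimately have "lam u * n u \<le> \<delta>\<^sup>2 / 2 * n u" by (intro mult_right_mono) auto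
      then show ?thesis using False by simp
    qed simp
  qed
  also have "\<dots> = \<delta>\<^sup>2 / 2 * (norm z)\<^sup>2" unfolding Rzz by (simp add: sum_distrib_left)
  finally have zAz: "Re (cinner z (A *v z)) \<le> \<delta>\<^sup>2 / 2 * (norm z)\<^sup>2" .
  have "Re (cinner z (A *v z)) = (norm (P *v z))\<^sup>2 + (norm (Q *v z))\<^sup>2"
    unfolding A_def mvM_add cinner_add_right using projector_qf[OF P, of z] projector_qf[OF Q, of z] by simp
  then have qz: "(norm (P *v z))\<^sup>2 \<le> \<delta>\<^sup>2 / 2 * (norm z)\<^sup>2" using zAz zero_le_power2[of "norm (Q *v z)"]
    by linarith
  have "norm (P *v x) \<le> norm (P *v y) + norm (P *v z)"
    using norm_triangle_ineq[of "P *v y" "P *v z"] by (subst xyz) (simp add: mv_add)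
  also have "\<dots> \<le> norm y + norm (P *v z)" using projector_norm[OF P, of y] by simp
  finally have px: "norm (P *v x) \<le> norm y + norm (P *v z)" .
  have "(norm (P *v x))\<^sup>2 \<le> (norm y)\<^sup>2 + \<delta> * ((norm y)\<^sup>2 + (norm z)\<^sup>2)"
    by (rule arith_final[OF d0 d1 norm_ge_zero norm_ge_zero qz px norm_ge_zero])
  then have "Re (cinner x (P *v x)) \<le> Re (cinner x (proj J *v x)) + \<delta> * (norm x)\<^sup>2"
    unfolding projector_qf[OF P] Rpj Rsum .
  then show ?thesis unfolding J_def A_def .
qed



lemma cinner_axis: "cinner u (axis i 1) = cnj (u $ i)"
  unfolding cinner_def axis_def by (simp add: if_distrib cong: if_cong)

lemma trace_basis:
  fixes X :: "complex^'n^'n"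
  assumes e: "eigsys A B" and fin: "finite B" and comp: "\<forall>x. x = (\<Sum>u\<in>B. cinner u x *s u)"
  shows "trace X = (\<Sum>u\<in>B. cinner u (X *v u))"
proof -
  have delta: "(\<Sum>u\<in>B. cnj (u $ i) * u $ j) = (if j = i then 1 else 0)" for i j :: 'n
  proof -
    have "axis i 1 = (\<Sum>u\<in>B. cinner u (axis i 1) *s u)" using comp by blast
    then have "axis i (1::complex) $ j = (\<Sum>u\<in>B. cnj (u $ i) * u $ j)"
      by (metis (no_types, lifting) cinner_axis sum.cong sum_component vector_smult_component)
    then show ?thesis by (simp add: axis_def)
  qed
  have "(\<Sum>u\<in>B. cinner u (X *v u)) = (\<Sum>u\<in>B. \<Sum>i\<in>UNIV. \<Sum>j\<in>UNIV. X $ i $ j * (cnj (u $ i) * u $ j))"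
    by (simp add: cinner_def matrix_vector_mult_def sum_distrib_left mult_ac)
  also have "\<dots> = (\<Sum>i\<in>UNIV. \<Sum>u\<in>B. \<Sum>j\<in>UNIV. X $ i $ j * (cnj (u $ i) * u $ j))"
    by (rule sum.swap)
  also have "\<dots> = (\<Sum>i\<in>UNIV. \<Sum>j\<in>UNIV. \<Sum>u\<in>B. X $ i $ j * (cnj (u $ i) * u $ j))"
    by (rule sum.cong[OF refl], rule sum.swap)
  also have "\<dots> = (\<Sum>i\<in>UNIV. \<Sum>j\<in>UNIV. X $ i $ j * (if j = i then 1 else 0))"
    by (simp add: sum_distrib_left[symmetric] delta)
  also have "\<dots> = (\<Sum>i\<in>UNIV. \<Sum>j\<in>UNIV. if j = i then X $ i $ j else 0)"
    by (intro sum.cong refl) simp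
  also have "\<dots> = trace X" by (simp add: trace_def)
  finally show ?thesis by simp
qed

lemma eig_real:
  assumes h: "hermitian A" and e: "eigsys A B" and u: "u \<in> B"
  shows "A *v u = complex_of_real (Re (cinner u (A *v u))) *s u"
proof -
  define l where "l = Re (cinner u (A *v u))"
  have 1: "A *v u = cinner u (A *v u) *s u" by (rule eigsys_eig[OF e u])
  have 2: "cinner u (A *v u) = of_real l" unfolding l_def by (rule hermitian_qf_real[OF h])
  have "A *v u = complex_of_real l *s u" using 1 unfolding 2 .
  then show ?thesis unfolding l_def .
qed

lemma psd_cinner: "psd A \<longleftrightarrow> hermitian A \<and> (\<forall>x. 0 \<le> Re (cinner x (A *v x)))"
  unfolding psd_def cinner_def ..

lemma trace_le:
  fixes M N \<rho> :: "complex^'n^'n"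
  assumes dens: "density \<rho>" and H: "\<And>x. Re (cinner x (M *v x)) \<le> Re (cinner x (N *v x)) + \<delta> * (norm x)\<^sup>2"
  shows "Re (trace (M ** \<rho>)) \<le> Re (trace (N ** \<rho>)) + \<delta>"
proof -
  have h: "hermitian \<rho>" and pos: "\<And>x. 0 \<le> Re (cinner x (\<rho> *v x))" and tr: "trace \<rho> = 1"
    using dens unfolding density_def psd_cinner by auto
  obtain B where e: "eigsys \<rho> B" and fin: "finite B" and comp: "\<forall>x. x = (\<Sum>u\<in>B. cinner u x *s u)"
    using spectral[OF h] by blast
  define p where "p u = Re (cinner u (\<rho> *v u))" for u
  have ru: "\<rho> *v u = complex_of_real (p u) *s u" if "u \<in> B" for u
    unfolding p_def by (rule eig_real[OF h e that])
  have tX: "Re (trace (X ** \<rho>)) = (\<Sum>u\<in>B. p u * Re (cinner u (X *v u)))" for X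
  proof -
    have "trace (X ** \<rho>) = (\<Sum>u\<in>B. cinner u ((X ** \<rho>) *v u))" by (rule trace_basis[OF e fin comp])
    also have "\<dots> = (\<Sum>u\<in>B. of_real (p u) * cinner u (X *v u))"
      by (rule sum.cong[OF refl]) (simp add: matrix_vector_mul_assoc[symmetric] ru mv_scale cinner_scale_right)
    finally show ?thesis by simp
  qed
  have n1: "(norm u)\<^sup>2 = 1" if "u \<in> B" for u
    using eigsys_unit[OF e that] cinner_self_Re[of u] by simp
  have sp: "(\<Sum>u\<in>B. p u) = 1"
  proof -
    have "Re (trace (mat 1 ** \<rho>)) = (\<Sum>u\<in>B. p u * Re (cinner u u))" using tX[of "mat 1"] by simp
    then show ?thesis using tr eigsys_unit[OF e] by simp
  qed
  have "Re (trace (M ** \<rho>)) = (\<Sum>u\<in>B. p u * Re (cinner u (M *v u)))" by (rule tX)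
  also have "\<dots> \<le> (\<Sum>u\<in>B. p u * (Re (cinner u (N *v u)) + \<delta>))"
  proof (rule sum_mono)
    fix u assume "u \<in> B"
    have "p u \<ge> 0" unfolding p_def by (rule pos)
    moreover have "Re (cinner u (M *v u)) \<le> Re (cinner u (N *v u)) + \<delta>"
      using H[of u] n1[OF \<open>u \<in> B\<close>] by simp
    ultimately show "p u * Re (cinner u (M *v u)) \<le> p u * (Re (cinner u (N *v u)) + \<delta>)"
      by (rule mult_left_mono[rotated])
  qed
  also have "\<dots> = Re (trace (N ** \<rho>)) + \<delta> * (\<Sum>u\<in>B. p u)"
    by (simp add: tX distrib_left sum.distrib sum_distrib_left mult.commute)
  finally show ?thesis using sp by simp
qed




lemma qf_proj: "Re (cinner x (proj J *v x)) = (\<Sum>u\<in>J. (cmod (cinner u x))\<^sup>2)"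
proof -
  have "cinner x (proj J *v x) = (\<Sum>u\<in>J. cinner u x * cnj (cinner u x))"
    unfolding proj_mv cinner_sum_right cinner_scale_right
    by (rule sum.cong[OF refl]) (simp add: cinner_commute[of x])
  also have "\<dots> = (\<Sum>u\<in>J. complex_of_real ((cmod (cinner u x))\<^sup>2))"
    by (simp only: complex_norm_square)
  finally show ?thesis by simp
qed

lemma qf_A:
  assumes h: "hermitian A" and e: "eigsys A B" and fin: "finite B"
    and comp: "\<forall>x. x = (\<Sum>u\<in>B. cinner u x *s u)"
  shows "Re (cinner x (A *v x)) = (\<Sum>u\<in>B. Re (cinner u (A *v u)) * (cmod (cinner u x))\<^sup>2)"
proof -
  define c where "c u = cinner u x" for u
  define lam where "lam u = Re (cinner u (A *v u))" for u
  have xs: "x = (\<Sum>u\<in>B. c u *s u)" unfolding c_def by (rule comp[rule_format])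
  have Au: "A *v u = of_real (lam u) *s u" if "u \<in> B" for u
    using eig_real[OF h e that] unfolding lam_def[symmetric] .
  have "A *v x = A *v (\<Sum>u\<in>B. c u *s u)" by (subst xs) (rule refl)
  also have "\<dots> = (\<Sum>u\<in>B. (c u * of_real (lam u)) *s u)"
    unfolding mv_sum by (rule sum.cong[OF refl])
      (simp add: mv_scale Au)
  finally have Ax: "A *v x = (\<Sum>u\<in>B. (c u * of_real (lam u)) *s u)" .
  have "cinner x (A *v x) = (\<Sum>u\<in>B. of_real (lam u) * (c u * cnj (c u)))"
    unfolding Ax cinner_sum_right cinner_scale_right
    by (rule sum.cong[OF refl]) (simp add: cinner_commute[of x] c_def mult_ac)
  also have "\<dots> = (\<Sum>u\<in>B. complex_of_real (lam u * (cmod (c u))\<^sup>2))"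
    by (simp only: of_real_mult complex_norm_square)
  finally show ?thesis unfolding c_def lam_def by simp
qed

lemma loewner_from_qf:
  assumes "hermitian M" "hermitian N" "\<And>x. Re (cinner x (N *v x)) \<le> c * Re (cinner x (M *v x))"
  shows "loewner_le N (c *\<^sub>R M)"
  unfolding loewner_le_def psd_cinner
proof (intro conjI allI)
  show "hermitian (c *\<^sub>R M - N)" by (rule hermitian_comb[OF assms(1,2)])
  fix x
  show "0 \<le> Re (cinner x ((c *\<^sub>R M - N) *v x))"
    using assms(3)[of x] by (simp add: mvM_diff mvM_scaleR cinner_diff_right cinner_scale_right)
qed

lemma hermitian_zero: "hermitian 0"
  unfolding hermitian_iff by simp

theorem lemma2:
  fixes P1 P2 :: "complex^'n^'n" and \<delta> :: real
  assumes "is_projector P1" and "is_projector P2" and "\<delta> > 0"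
  shows "\<exists>P::complex^'n^'n. is_projector P \<and>
     (\<forall>\<rho>::complex^'n^'n. density \<rho> \<longrightarrow>
        Re (trace (P ** \<rho>)) \<ge> max (Re (trace (P1 ** \<rho>))) (Re (trace (P2 ** \<rho>))) - \<delta>) \<and>
     loewner_le P ((2 / \<delta>\<^sup>2) *\<^sub>R (P1 + P2))"
proof -
  note P1 = assms(1) and P2 = assms(2) and d0 = assms(3)
  have h1: "hermitian P1" and h2: "hermitian P2" using P1 P2 unfolding is_projector_def by auto
  have hA: "hermitian (P1 + P2)" by (rule hermitian_add[OF h1 h2])
  have qfA: "Re (cinner x ((P1 + P2) *v x)) = (norm (P1 *v x))\<^sup>2 + (norm (P2 *v x))\<^sup>2" for x
    by (simp add: mvM_add cinner_add_right projector_qf[OF P1] projector_qf[OF P2])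
  show ?thesis
  proof (cases "\<delta> \<le> 1")
    case False
    have proj0: "is_projector (0::complex^'n^'n)"
      unfolding is_projector_def using hermitian_zero by simp
    have tr: "Re (trace (P ** \<rho>)) \<le> Re (trace ((0::complex^'n^'n) ** \<rho>)) + \<delta>"
      if "is_projector P" "density \<rho>" for P \<rho> :: "complex^'n^'n"
    proof (rule trace_le[OF that(2)])
      fix x :: "complex^'n"
      have "(norm (P *v x))\<^sup>2 \<le> (norm x)\<^sup>2" using projector_norm[OF that(1), of x] by (simp add: power_mono)
      also have "\<dots> \<le> \<delta> * (norm x)\<^sup>2" using False mult_right_mono[of 1 \<delta> "(norm x)\<^sup>2"] by simp
      finally show "Re (cinner x (P *v x)) \<le> Re (cinner x (0 *v x)) + \<delta> * (norm x)\<^sup>2"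
        by (simp add: projector_qf[OF that(1)])
    qed
    have lw: "loewner_le 0 ((2 / \<delta>\<^sup>2) *\<^sub>R (P1 + P2))"
    proof (rule loewner_from_qf[OF hA hermitian_zero])
      fix x :: "complex^'n"
      show "Re (cinner x (0 *v x)) \<le> 2 / \<delta>\<^sup>2 * Re (cinner x ((P1 + P2) *v x))"
        unfolding qfA by simp
    qed
    show ?thesis
    proof (intro exI[of _ 0] conjI allI impI proj0 lw)
      fix \<rho> :: "complex^'n^'n" assume d: "density \<rho>"
      show "max (Re (trace (P1 ** \<rho>))) (Re (trace (P2 ** \<rho>))) - \<delta> \<le> Re (trace (0 ** \<rho>))"
        using max.boundedI[OF tr[OF P1 d] tr[OF P2 d]] by linarith
    qed
  next
    case True
    obtain B where e: "eigsys (P1 + P2) B" and fin: "finite B"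
      and comp: "\<forall>x. x = (\<Sum>u\<in>B. cinner u x *s u)"
      using spectral[OF hA] by blast
    define J where "J = {u\<in>B. Re (cinner u ((P1 + P2) *v u)) \<ge> \<delta>\<^sup>2 / 2}"
    have J': "J = {u\<in>B. Re (cinner u ((P2 + P1) *v u)) \<ge> \<delta>\<^sup>2 / 2}" unfolding J_def by (simp add: add.commute)
    have e': "eigsys (P2 + P1) B" using e by (simp add: add.commute)
    have JB: "J \<subseteq> B" unfolding J_def by auto
    have finJ: "finite J" using fin JB finite_subset by blast
    have projJ: "is_projector (proj J)" unfolding is_projector_def
      using proj_idem[OF eigsys_subset[OF e JB] finJ] proj_hermitian by blast
    have tr1: "Re (trace (P1 ** \<rho>)) \<le> Re (trace (proj J ** \<rho>)) + \<delta>" if "density \<rho>" for \<rho>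
      by (rule trace_le[OF that]) (rule main_ineq[OF P1 P2 d0 True e fin comp, folded J_def])
    have tr2: "Re (trace (P2 ** \<rho>)) \<le> Re (trace (proj J ** \<rho>)) + \<delta>" if "density \<rho>" for \<rho>
      by (rule trace_le[OF that]) (rule main_ineq[OF P2 P1 d0 True e' fin comp, folded J'])
    have lw: "loewner_le (proj J) ((2 / \<delta>\<^sup>2) *\<^sub>R (P1 + P2))"
    proof (rule loewner_from_qf[OF hA proj_hermitian])
      fix x :: "complex^'n"
      define lam where "lam u = Re (cinner u ((P1 + P2) *v u))" for u
      define n where "n u = (cmod (cinner u x))\<^sup>2" for u
      have lam0: "lam u \<ge> 0" for u unfolding lam_def qfA by simp
      have "Re (cinner x (proj J *v x)) = (\<Sum>u\<in>J. n u)" unfolding qf_proj n_def ..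
      also have "\<dots> \<le> (\<Sum>u\<in>J. 2 / \<delta>\<^sup>2 * (lam u * n u))"
      proof (rule sum_mono)
        fix u assume "u \<in> J"
        then have "lam u \<ge> \<delta>\<^sup>2 / 2" unfolding J_def lam_def by auto
        then have "2 / \<delta>\<^sup>2 * (\<delta>\<^sup>2 / 2) \<le> 2 / \<delta>\<^sup>2 * lam u" using d0 by (intro mult_left_mono) auto
        moreover have "2 / \<delta>\<^sup>2 * (\<delta>\<^sup>2 / 2) = 1" using d0 by simp
        ultimately have "2 / \<delta>\<^sup>2 * lam u \<ge> 1" by simp
        moreover have "n u \<ge> 0" unfolding n_def by simp
        ultimately have "1 * n u \<le> 2 / \<delta>\<^sup>2 * lam u * n u" by (intro mult_right_mono) auto
        then show "n u \<le> 2 / \<delta>\<^sup>2 * (lam u * n u)" by (simp add: mult.assoc)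
      qed
      also have "\<dots> \<le> (\<Sum>u\<in>B. 2 / \<delta>\<^sup>2 * (lam u * n u))"
        by (rule sum_mono2[OF fin JB]) (intro mult_nonneg_nonneg, simp_all add: lam0 n_def)
      also have "\<dots> = 2 / \<delta>\<^sup>2 * Re (cinner x ((P1 + P2) *v x))"
        by (simp only: qf_A[OF hA e fin comp, of x] sum_distrib_left lam_def n_def)
      finally show "Re (cinner x (proj J *v x)) \<le> 2 / \<delta>\<^sup>2 * Re (cinner x ((P1 + P2) *v x))" .
    qed
    show ?thesis
    proof (intro exI[of _ "proj J"] conjI allI impI projJ lw)
      fix \<rho> :: "complex^'n^'n" assume d: "density \<rho>"
      show "max (Re (trace (P1 ** \<rho>))) (Re (trace (P2 ** \<rho>))) - \<delta> \<le> Re (trace (proj J ** \<rho>))"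
        using max.boundedI[OF tr1[OF d] tr2[OF d]] by linarith
    qed
  qed
qed

end
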